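(* Let $\mathbb{V}$ be a BIT speciale variety with signature $\mathcal{F}$, BIT speciale terms $0$, $\alpha_1,\dots,\alpha_n$, $\theta$ (as in the context). In every term below, the variables $y$ (with or without indices) are the ideal variables and the variables $x$ (with or without indices) are the parameters; all listed terms are ideal terms in their $y$-variables. For an operation symbol $\tau$ of arity $k$ and $1\le i\le n$, write $$T_{\tau,i}:=\alpha_i\big(\tau(\theta(y_{11},\dots,y_{1n},x_1),\theta(y_{21},\dots,y_{2n},x_2),\dots,\theta(y_{k1},\dots,y_{kn},x_k)),\ \tau(x_1,\dots,x_k)\big),$$ and, for $1\le j\le k$, $$S_{\tau,i,j}:=\alpha_i\big(\tau(x_1,\dots,x_{j-1},\theta(y_1,\dots,y_n,x_j),x_{j+1},\dots,x_k),\ \tau(x_1,\dots,x_k)\big),$$ and let $R_i:=\alpha_i(\theta(y_1,\dots,y_n,x),\theta(y_{n+1},\dots,y_{2n},x))$. Then each of the following sets of terms determines ideals in $\mathbb{V}$: (i) the terms $\theta(y_1,\dots,y_n,y_{n+1})$ and $\alpha_i(y_1,y_2)$ ($1\le i\le n$), together with $T_{\tau,i}$ for all $\tau\in\mathcal{F}\cup\{\theta\}$ and all $1\le i\le n$; (ii) the terms $0$, $\theta(y_1,\dots,y_n,y_{n+1})$ and $\alpha_i(y,0)$ ($1\le i\le n$), together with $T_{\tau,i}$ for all $\tau\in\mathcal{F}\cup\{\theta\}\cup\{\alpha_j\mid 1\le j\le n\}$ and all $1\le i\le n$; (iii) the terms $\theta(y_1,\dots,y_n,y_{n+1})$, $\alpha_i(y,0)$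 and $R_i$ ($1\le i\le n$), together with $T_{\tau,i}$ for all $\tau\in\mathcal{F}$ and all $1\le i\le n$; (iv) the terms $R_i$, $\theta(y_1,\dots,y_n,y_{n+1})$ and $\alpha_i(y,0)$ ($1\le i\le n$), together with $S_{\tau,i,j}$ for all $\tau\in\mathcal{F}$ (of arity $k$) and all $i,j$ with $1\le i\le n$, $1\le j\le k$. Moreover, if $\mathbb{V}$ is semi-abelian, then in (i) the terms $\theta(y_1,\dots,y_{n+1}),\alpha_i(y_1,y_2)$, in (ii) the terms $0,\theta(y_1,\dots,y_{n+1}),\alpha_i(y,0)$, in (iii) the terms $\theta(y_1,\dots,y_{n+1}),\alpha_i(y,0)$, and in (iv) the terms $\theta(y_1,\dots,y_{n+1}),\alpha_i(y,0)$ can be replaced by the terms $\tau(y_1,\dots,y_k)$ for all operation symbols $\tau\in\mathcal{F}$ (including the constant $0$), $k$ being the arity of $\tau$, and the resulting sets still determine ideals in $\mathbb{V}$.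
   Context: Let $\mathbb{V}$ be a variety of universal algebras with signature $\mathcal{F}$ (a set of finitary operation symbols; constants are 0-ary). $\mathbb{V}$ is called BIT speciale if its algebraic theory contains a constant $0$ and, for some natural number $n\ge1$, binary terms $\alpha_1,\dots,\alpha_n$ and an $(n+1)$-ary term $\theta$ such that the identities $\alpha_i(x,x)=0$ ($1\le i\le n$) and $\theta(\alpha_1(x,y),\dots,\alpha_n(x,y),y)=x$ hold in $\mathbb{V}$. A semi-abelian variety is (equivalently, by Bourn–Janelidze) a BIT speciale variety in which $0$ is the only constant of its algebraic theory. A term $t(x_1,\dots,x_m,y_1,\dots,y_p)$ over $\mathcal{F}$ is an ideal term in the variables $y_1,\dots,y_p$ if $t(x_1,\dots,x_m,0,\dots,0)=0$ is an identity of $\mathbb{V}$. A non-empty subset $H$ of a $\mathbb{V}$-algebra $A$ is an ideal if for every ideal term $t(x_1,\dots,x_m,y_1,\dots,y_p)$ in the variables $y_1,\dots,y_p$, all $a_1,\dots,a_m\in A$ and all $b_1,\dots,b_p\in H$, one has $t(a_1,\dots,a_m,b_1,\dots,b_p)\in H$. A set $T$ of ideal terms determines ideals in $\mathbb{V}$ if for every $\mathbb{V}$-algebra $A$, a non-empty subset $H\subseteq A$ is an ideal if and only if for every $t\in T$, every assignment of elements of $A$ to its $x$-variables and of elements of $H$ to its $y$-variables yields a value in $H$. *)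

theory Defs
  imports Main
begin

datatype ('f, 'v) trm = Var 'v | App 'f "('f, 'v) trm list"

fun wf_trm :: "('f \<Rightarrow> nat) \<Rightarrow> ('f, 'v) trm \<Rightarrow> bool" where
  "wf_trm ar (Var v) = True"
| "wf_trm ar (App f ts) = (length ts = ar f \<and> (\<forall>t\<in>set ts. wf_trm ar t))"

fun vars :: "('f, 'v) trm \<Rightarrow> 'v set" where
  "vars (Var v) = {v}"
| "vars (App f ts) = (\<Union>t\<in>set ts. vars t)"

fun subst :: "('v \<Rightarrow> ('f, 'w) trm) \<Rightarrow> ('f, 'v) trm \<Rightarrow> ('f, 'w) trm" where
  "subst \<sigma> (Var v) = \<sigma> v"
| "subst \<sigma> (App f ts) = App f (map (subst \<sigma>) ts)"

text \<open>Evaluation in an algebra whose carrier is the whole type 'a.\<close>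
fun eval :: "('f \<Rightarrow> 'a list \<Rightarrow> 'a) \<Rightarrow> ('v \<Rightarrow> 'a) \<Rightarrow> ('f, 'v) trm \<Rightarrow> 'a" where
  "eval I \<rho> (Var v) = \<rho> v"
| "eval I \<rho> (App f ts) = I f (map (eval I \<rho>) ts)"

text \<open>Instantiating the variables 0,1,...,m-1 of a term by a list of m terms
  (this is how a derived m-ary operation, given by a term, is applied).\<close>
definition inst :: "('f, nat) trm \<Rightarrow> ('f, nat) trm list \<Rightarrow> ('f, nat) trm" where
  "inst t ts = subst (\<lambda>v. if v < length ts then ts ! v else Var v) t"

text \<open>The variety is presented by a set E of well-formed defining identities.
  The identities holding in the variety (its algebraic theory) are the equational
  consequences of E (Birkhoff).\<close>

definition wf_eqs :: "('f \<Rightarrow> nat) \<Rightarrow> (('f, nat) trm \<times> ('f, nat) trm) set \<Rightarrow> bool" where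
  "wf_eqs ar E \<longleftrightarrow> (\<forall>(l, r)\<in>E. wf_trm ar l \<and> wf_trm ar r)"

inductive_set eqth :: "('f \<Rightarrow> nat) \<Rightarrow> (('f, nat) trm \<times> ('f, nat) trm) set
    \<Rightarrow> (('f, nat) trm \<times> ('f, nat) trm) set"
  for ar E where
  ax: "(l, r) \<in> E \<Longrightarrow> (l, r) \<in> eqth ar E"
| refl: "wf_trm ar t \<Longrightarrow> (t, t) \<in> eqth ar E"
| sym: "(s, t) \<in> eqth ar E \<Longrightarrow> (t, s) \<in> eqth ar E"
| trans: "(s, t) \<in> eqth ar E \<Longrightarrow> (t, u) \<in> eqth ar E \<Longrightarrow> (s, u) \<in> eqth ar E"
| cong: "length ss = ar f \<Longrightarrow> list_all2 (\<lambda>s t. (s, t) \<in> eqth ar E) ss ts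
          \<Longrightarrow> (App f ss, App f ts) \<in> eqth ar E"
| subst: "(s, t) \<in> eqth ar E \<Longrightarrow> (\<forall>v. wf_trm ar (\<sigma> v))
          \<Longrightarrow> (subst \<sigma> s, subst \<sigma> t) \<in> eqth ar E"

definition models :: "(('f, nat) trm \<times> ('f, nat) trm) set \<Rightarrow> ('f \<Rightarrow> 'a list \<Rightarrow> 'a) \<Rightarrow> bool" where
  "models E I \<longleftrightarrow> (\<forall>(l, r)\<in>E. \<forall>\<rho>. eval I \<rho> l = eval I \<rho> r)"

definition bit_speciale ::
  "('f \<Rightarrow> nat) \<Rightarrow> (('f, nat) trm \<times> ('f, nat) trm) set \<Rightarrow> nat
    \<Rightarrow> ('f, nat) trm \<Rightarrow> (nat \<Rightarrow> ('f, nat) trm) \<Rightarrow> ('f, nat) trm \<Rightarrow> bool" where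
  "bit_speciale ar E n z alpha theta \<longleftrightarrow>
     n \<ge> 1
   \<and> wf_trm ar z \<and> vars z = {}
   \<and> (\<forall>i\<in>{1..n}. wf_trm ar (alpha i) \<and> vars (alpha i) \<subseteq> {0, 1})
   \<and> wf_trm ar theta \<and> vars theta \<subseteq> {0..n}
   \<and> (\<forall>i\<in>{1..n}. (inst (alpha i) [Var 0, Var 0], z) \<in> eqth ar E)
   \<and> (inst theta (map (\<lambda>i. inst (alpha i) [Var 0, Var 1]) [1..<n+1] @ [Var 1]), Var 0)
        \<in> eqth ar E"

definition only_constant_zero ::
  "('f \<Rightarrow> nat) \<Rightarrow> (('f, nat) trm \<times> ('f, nat) trm) set \<Rightarrow> ('f, nat) trm \<Rightarrow> bool" where
  "only_constant_zero ar E z \<longleftrightarrow>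
     (\<forall>c. wf_trm ar c \<and> vars c = {} \<longrightarrow> (c, z) \<in> eqth ar E)"

definition ideal_term ::
  "('f \<Rightarrow> nat) \<Rightarrow> (('f, nat) trm \<times> ('f, nat) trm) set \<Rightarrow> ('f, nat) trm
    \<Rightarrow> ('f, nat) trm \<Rightarrow> nat set \<Rightarrow> bool" where
  "ideal_term ar E z t Y \<longleftrightarrow>
     wf_trm ar t \<and> (subst (\<lambda>v. if v \<in> Y then z else Var v) t, z) \<in> eqth ar E"

definition closed_under :: "('f \<Rightarrow> 'a list \<Rightarrow> 'a) \<Rightarrow> 'a set \<Rightarrow> ('f, nat) trm \<Rightarrow> nat set \<Rightarrow> bool" where
  "closed_under I H t Y \<longleftrightarrow> (\<forall>\<rho>. (\<forall>v\<in>Y. \<rho> v \<in> H) \<longrightarrow> eval I \<rho> t \<in> H)"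

definition is_ideal ::
  "('f \<Rightarrow> nat) \<Rightarrow> (('f, nat) trm \<times> ('f, nat) trm) set \<Rightarrow> ('f, nat) trm
    \<Rightarrow> ('f \<Rightarrow> 'a list \<Rightarrow> 'a) \<Rightarrow> 'a set \<Rightarrow> bool" where
  "is_ideal ar E z I H \<longleftrightarrow>
     H \<noteq> {} \<and> (\<forall>t Y. ideal_term ar E z t Y \<longrightarrow> closed_under I H t Y)"

text \<open>The algebra type 'a is a free type variable,
  universally quantified at theorem level.\<close>
definition determines_ideals ::
  "('f \<Rightarrow> nat) \<Rightarrow> (('f, nat) trm \<times> ('f, nat) trm) set \<Rightarrow> ('f, nat) trm
    \<Rightarrow> (('f, nat) trm \<times> nat set) set \<Rightarrow> 'a itself \<Rightarrow> bool" where
  "determines_ideals ar E z T _ \<longleftrightarrow>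
     (\<forall>(I :: 'f \<Rightarrow> 'a list \<Rightarrow> 'a). models E I \<longrightarrow>
        (\<forall>H. H \<noteq> {} \<longrightarrow>
           (is_ideal ar E z I H \<longleftrightarrow> (\<forall>(t, Y)\<in>T. closed_under I H t Y))))"

text \<open>Variable conventions: parameter x_j is Var (2j), ideal variable y_j is
  Var (2j+1) (indices 0-based); the ideal variables are exactly the odd ones.
  Double-indexed y_{a,b} (a < k, b < n) is y_(a*n+b).\<close>

definition xv :: "nat \<Rightarrow> ('f, nat) trm" where "xv j = Var (2 * j)"
definition yv :: "nat \<Rightarrow> ('f, nat) trm" where "yv j = Var (2 * j + 1)"
definition Yodd :: "nat set" where "Yodd = {v. odd v}"

text \<open>An (possibly derived) operation is represented by the function building
  the term from argument terms, together with its arity.\<close>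

definition T_term :: "nat \<Rightarrow> (nat \<Rightarrow> ('f, nat) trm) \<Rightarrow> ('f, nat) trm
    \<Rightarrow> (('f, nat) trm list \<Rightarrow> ('f, nat) trm) \<Rightarrow> nat \<Rightarrow> nat \<Rightarrow> ('f, nat) trm" where
  "T_term n alpha theta g k i =
     inst (alpha i)
       [g (map (\<lambda>a. inst theta (map (\<lambda>b. yv (a * n + b)) [0..<n] @ [xv a])) [0..<k]),
        g (map xv [0..<k])]"

text \<open>S_{tau,i,j}; here j is 0-based (j < k).\<close>
definition S_term :: "nat \<Rightarrow> (nat \<Rightarrow> ('f, nat) trm) \<Rightarrow> ('f, nat) trm
    \<Rightarrow> (('f, nat) trm list \<Rightarrow> ('f, nat) trm) \<Rightarrow> nat \<Rightarrow> nat \<Rightarrow> nat \<Rightarrow> ('f, nat) trm" where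
  "S_term n alpha theta g k i j =
     inst (alpha i)
       [g (map (\<lambda>a. if a = j then inst theta (map yv [0..<n] @ [xv a]) else xv a) [0..<k]),
        g (map xv [0..<k])]"

definition R_term :: "nat \<Rightarrow> (nat \<Rightarrow> ('f, nat) trm) \<Rightarrow> ('f, nat) trm \<Rightarrow> nat \<Rightarrow> ('f, nat) trm" where
  "R_term n alpha theta i =
     inst (alpha i) [inst theta (map yv [0..<n] @ [xv 0]),
                     inst theta (map (\<lambda>b. yv (n + b)) [0..<n] @ [xv 0])]"

definition theta_y :: "nat \<Rightarrow> ('f, nat) trm \<Rightarrow> ('f, nat) trm" where
  "theta_y n theta = inst theta (map yv [0..<n+1])"

definition alpha_yy :: "(nat \<Rightarrow> ('f, nat) trm) \<Rightarrow> nat \<Rightarrow> ('f, nat) trm" where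
  "alpha_yy alpha i = inst (alpha i) [yv 0, yv 1]"

definition alpha_y0 :: "('f, nat) trm \<Rightarrow> (nat \<Rightarrow> ('f, nat) trm) \<Rightarrow> nat \<Rightarrow> ('f, nat) trm" where
  "alpha_y0 z alpha i = inst (alpha i) [yv 0, z]"

definition op_y :: "('f \<Rightarrow> nat) \<Rightarrow> 'f \<Rightarrow> ('f, nat) trm" where
  "op_y ar f = App f (map yv [0..<ar f])"

definition TF :: "('f \<Rightarrow> nat) \<Rightarrow> nat \<Rightarrow> (nat \<Rightarrow> ('f, nat) trm) \<Rightarrow> ('f, nat) trm \<Rightarrow> ('f, nat) trm set" where
  "TF ar n alpha theta = {T_term n alpha theta (App f) (ar f) i | f i. i \<in> {1..n}}"

definition Ttheta :: "nat \<Rightarrow> (nat \<Rightarrow> ('f, nat) trm) \<Rightarrow> ('f, nat) trm \<Rightarrow> ('f, nat) trm set" where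
  "Ttheta n alpha theta = {T_term n alpha theta (inst theta) (n + 1) i | i. i \<in> {1..n}}"

definition Talpha :: "nat \<Rightarrow> (nat \<Rightarrow> ('f, nat) trm) \<Rightarrow> ('f, nat) trm \<Rightarrow> ('f, nat) trm set" where
  "Talpha n alpha theta =
     {T_term n alpha theta (inst (alpha j)) 2 i | i j. i \<in> {1..n} \<and> j \<in> {1..n}}"

definition SF :: "('f \<Rightarrow> nat) \<Rightarrow> nat \<Rightarrow> (nat \<Rightarrow> ('f, nat) trm) \<Rightarrow> ('f, nat) trm \<Rightarrow> ('f, nat) trm set" where
  "SF ar n alpha theta =
     {S_term n alpha theta (App f) (ar f) i j | f i j. i \<in> {1..n} \<and> j < ar f}"

definition Rs :: "nat \<Rightarrow> (nat \<Rightarrow> ('f, nat) trm) \<Rightarrow> ('f, nat) trm \<Rightarrow> ('f, nat) trm set" where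
  "Rs n alpha theta = {R_term n alpha theta i | i. i \<in> {1..n}}"

definition AlphaYY :: "nat \<Rightarrow> (nat \<Rightarrow> ('f, nat) trm) \<Rightarrow> ('f, nat) trm set" where
  "AlphaYY n alpha = {alpha_yy alpha i | i. i \<in> {1..n}}"

definition AlphaY0 :: "nat \<Rightarrow> ('f, nat) trm \<Rightarrow> (nat \<Rightarrow> ('f, nat) trm) \<Rightarrow> ('f, nat) trm set" where
  "AlphaY0 n z alpha = {alpha_y0 z alpha i | i. i \<in> {1..n}}"

definition OpsY :: "('f \<Rightarrow> nat) \<Rightarrow> ('f, nat) trm \<Rightarrow> ('f, nat) trm set" where
  "OpsY ar z = insert z (range (op_y ar))"

definition with_Y :: "('f, nat) trm set \<Rightarrow> (('f, nat) trm \<times> nat set) set" where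
  "with_Y S = (\<lambda>t. (t, Yodd)) ` S"

definition set_i where
  "set_i ar n z alpha theta =
     ({theta_y n theta} \<union> AlphaYY n alpha, TF ar n alpha theta \<union> Ttheta n alpha theta)"
definition set_ii where
  "set_ii ar n z alpha theta =
     ({z, theta_y n theta} \<union> AlphaY0 n z alpha,
      TF ar n alpha theta \<union> Ttheta n alpha theta \<union> Talpha n alpha theta)"
definition set_iii where
  "set_iii ar n z alpha theta =
     ({theta_y n theta} \<union> AlphaY0 n z alpha, Rs n alpha theta \<union> TF ar n alpha theta)"
definition set_iv where
  "set_iv ar n z alpha theta =
     ({theta_y n theta} \<union> AlphaY0 n z alpha, Rs n alpha theta \<union> SF ar n alpha theta)"

text \<open>Each set is split as (replaceable part, remaining part).\<close>

end

theory Submission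
  imports Defs
begin

lemma eval_subst: "eval I \<rho> (subst \<sigma> t) = eval I (\<lambda>v. eval I \<rho> (\<sigma> v)) t"
  by (induction t) (auto cong: map_cong)

lemma eval_cong: "(\<forall>v\<in>vars t. \<rho> v = \<rho>' v) \<Longrightarrow> eval I \<rho> t = eval I \<rho>' t"
  by (induction t) (auto cong: map_cong)

lemma subst_cong: "(\<forall>v\<in>vars t. \<sigma> v = \<sigma>' v) \<Longrightarrow> subst \<sigma> t = subst \<sigma>' t"
  by (induction t) (auto cong: map_cong)

lemma subst_Var: "subst Var t = t"
  by (induction t) (auto simp: map_idI)

lemma subst_subst: "subst \<sigma> (subst \<tau> t) = subst (\<lambda>v. subst \<sigma> (\<tau> v)) t"
  by (induction t) auto

lemma wf_subst: "wf_trm ar t \<Longrightarrow> (\<forall>v\<in>vars t. wf_trm ar (\<sigma> v)) \<Longrightarrow> wf_trm ar (subst \<sigma> t)"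
  by (induction t) auto

lemma eqth_sound:
  assumes "(s, t) \<in> eqth ar E" "models E I"
  shows "eval I \<rho> s = eval I \<rho> t"
  using assms(1)
proof (induction arbitrary: \<rho> rule: eqth.induct)
  case (ax l r)
  then show ?case using assms(2) unfolding models_def by auto
next
  case (cong ss f ts)
  then have "map (eval I \<rho>) ss = map (eval I \<rho>) ts"
    by (auto simp: list_all2_conv_all_nth intro: nth_equalityI)
  then show ?case by simp
next
  case (subst s t \<sigma>)
  then show ?case by (simp add: eval_subst)
qed auto

lemma eqth_subst_cong:
  "wf_trm ar t \<Longrightarrow> (\<forall>v\<in>vars t. (\<sigma> v, \<sigma>' v) \<in> eqth ar E) \<Longrightarrow> (subst \<sigma> t, subst \<sigma>' t) \<in> eqth ar E"
proof (induction t)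
  case (Var x)
  then show ?case by simp
next
  case (App f ts)
  have "list_all2 (\<lambda>s t. (s, t) \<in> eqth ar E) (map (subst \<sigma>) ts) (map (subst \<sigma>') ts)"
    using App by (auto simp: list_all2_conv_all_nth)
  then show ?case using App.prems by (auto intro: eqth.cong)
qed

lemma eqth_wf:
  assumes "wf_eqs ar E" "(s, t) \<in> eqth ar E" shows "wf_trm ar s \<and> wf_trm ar t"
  using assms(2)
proof (induction rule: eqth.induct)
  case (ax l r)
  then show ?case using assms(1) unfolding wf_eqs_def by auto
next
  case (cong ss f ts)
  then show ?case by (auto simp: list_all2_conv_all_nth in_set_conv_nth)
next
  case (subst s t \<sigma>)
  then show ?case by (auto intro: wf_subst)
qed auto

lemma inst_inst:
  "vars t \<subseteq> {..<length ts} \<Longrightarrow> inst (inst t ts) us = inst t (map (\<lambda>s. inst s us) ts)"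
  unfolding inst_def subst_subst
  by (rule subst_cong) auto

lemma subst_inst:
  "vars t \<subseteq> {..<length ts} \<Longrightarrow> subst \<sigma> (inst t ts) = inst t (map (subst \<sigma>) ts)"
  unfolding inst_def subst_subst
  by (rule subst_cong) auto

lemma wf_inst: "wf_trm ar t \<Longrightarrow> \<forall>s\<in>set ts. wf_trm ar s \<Longrightarrow> wf_trm ar (inst t ts)"
  unfolding inst_def by (rule wf_subst) auto

lemma eval_inst:
  "eval I \<rho> (inst t ts) = eval I (\<lambda>v. if v < length ts then eval I \<rho> (ts ! v) else \<rho> v) t"
  unfolding inst_def eval_subst by (rule eval_cong) auto

lemma subst_closed: assumes "vars t = {}" shows "subst \<sigma> t = t"
proof -
  have "subst \<sigma> t = subst Var t" by (rule subst_cong) (simp add: assms)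
  then show ?thesis by (simp add: subst_Var)
qed

lemma inst_closed: "vars t = {} \<Longrightarrow> inst t ts = t"
  unfolding inst_def by (rule subst_closed)

lemma inst_cong_eqth:
  assumes "wf_trm ar t" "vars t \<subseteq> {..<length ts}"
    "list_all2 (\<lambda>a b. (a, b) \<in> eqth ar E) ts ts'"
  shows "(inst t ts, inst t ts') \<in> eqth ar E"
  unfolding inst_def
proof (rule eqth_subst_cong[OF assms(1)], intro ballI)
  fix v assume "v \<in> vars t"
  then have "v < length ts" using assms(2) by auto
  then show "((if v < length ts then ts ! v else Var v), (if v < length ts' then ts' ! v else Var v)) \<in> eqth ar E"
    using assms(3) by (auto simp: list_all2_conv_all_nth)
qed

lemma inst_eqth:
  assumes "(s, t) \<in> eqth ar E" "\<forall>x\<in>set ts. wf_trm ar x"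
  shows "(inst s ts, inst t ts) \<in> eqth ar E"
  unfolding inst_def
  by (rule eqth.subst[OF assms(1)]) (use assms(2) in auto)

locale bitv =
  fixes ar :: "'f \<Rightarrow> nat" and E :: "(('f, nat) trm \<times> ('f, nat) trm) set"
    and n :: nat and z :: "('f, nat) trm"
    and alpha :: "nat \<Rightarrow> ('f, nat) trm" and theta :: "('f, nat) trm"
  assumes bit: "bit_speciale ar E n z alpha theta"
begin

lemma n1: "n \<ge> 1" and wf_z: "wf_trm ar z" and vars_z: "vars z = {}"
  and wf_alpha: "i \<in> {1..n} \<Longrightarrow> wf_trm ar (alpha i)"
  and vars_alpha: "i \<in> {1..n} \<Longrightarrow> vars (alpha i) \<subseteq> {0, 1}"
  and wf_theta: "wf_trm ar theta" and vars_theta: "vars theta \<subseteq> {0..n}"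
  and ax_alpha: "i \<in> {1..n} \<Longrightarrow> (inst (alpha i) [Var 0, Var 0], z) \<in> eqth ar E"
  and ax_theta: "(inst theta (map (\<lambda>i. inst (alpha i) [Var 0, Var 1]) [1..<n+1] @ [Var 1]), Var 0)
        \<in> eqth ar E"
  using bit unfolding bit_speciale_def by auto

lemma vars_alpha2: "i \<in> {1..n} \<Longrightarrow> vars (alpha i) \<subseteq> {..<length [a, b]}"
  using vars_alpha by fastforce

lemma vars_theta2: "length ts = Suc n \<Longrightarrow> vars theta \<subseteq> {..<length ts}"
  using vars_theta by fastforce

lemma vars_alpha_lt: "i \<in> {1..n} \<Longrightarrow> x \<in> vars (alpha i) \<Longrightarrow> x < 2"
  using vars_alpha by fastforce

lemma vars_alpha_lt': "1 \<le> i \<Longrightarrow> i \<le> n \<Longrightarrow> x \<in> vars (alpha i) \<Longrightarrow> x < 2"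
  using vars_alpha_lt by auto

lemma vars_theta_lt: "x \<in> vars theta \<Longrightarrow> x < Suc n"
  using vars_theta by fastforce

lemma zero_eq:
  assumes i: "i \<in> {1..n}" and "wf_trm ar s"
  shows "(inst (alpha i) [s, s], z) \<in> eqth ar E"
proof -
  have "(inst (inst (alpha i) [Var 0, Var 0]) [s], inst z [s]) \<in> eqth ar E"
    by (rule inst_eqth[OF ax_alpha[OF i]]) (use assms in auto)
  moreover have "inst (inst (alpha i) [Var 0, Var 0]) [s] = inst (alpha i) [s, s]"
    by (subst inst_inst[OF vars_alpha2[OF i]]) (simp add: inst_def)
  ultimately show ?thesis by (simp add: inst_closed vars_z)
qed

lemma theta0:
  assumes "wf_trm ar s"
  shows "(inst theta (replicate n z @ [s]), s) \<in> eqth ar E"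
proof -
  let ?L = "map (\<lambda>i. inst (alpha i) [Var 0, Var 1]) [1..<n+1] @ [Var 1]"
  have "(inst (inst theta ?L) [s, s], inst (Var 0) [s, s]) \<in> eqth ar E"
    by (rule inst_eqth[OF ax_theta]) (use assms in auto)
  moreover have "inst (Var 0) [s, s] = s" by (simp add: inst_def)
  moreover have "inst (inst theta ?L) [s, s] = inst theta (map (\<lambda>t. inst t [s, s]) ?L)"
    by (rule inst_inst, rule vars_theta2) simp
  moreover have "map (\<lambda>t. inst t [s, s]) ?L = map (\<lambda>i. inst (alpha i) [s, s]) [1..<n+1] @ [s]"
  proof -
    have "inst (inst (alpha i) [Var 0, Var 1]) [s, s] = inst (alpha i) [s, s]" if "i \<in> set [1..<n+1]" for i
      using that by (subst inst_inst[OF vars_alpha2]) (auto simp: inst_def)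
    then show ?thesis by (simp add: inst_def)
  qed
  moreover have "(inst theta (map (\<lambda>i. inst (alpha i) [s, s]) [1..<n+1] @ [s]),
                  inst theta (replicate n z @ [s])) \<in> eqth ar E"
  proof (rule inst_cong_eqth[OF wf_theta])
    show "vars theta \<subseteq> {..<length (map (\<lambda>i. inst (alpha i) [s, s]) [1..<n + 1] @ [s])}"
      by (rule vars_theta2) simp
    show "list_all2 (\<lambda>a b. (a, b) \<in> eqth ar E) (map (\<lambda>i. inst (alpha i) [s, s]) [1..<n + 1] @ [s])
       (replicate n z @ [s])"
    proof (rule list_all2_appendI)
      show "list_all2 (\<lambda>a b. (a, b) \<in> eqth ar E) (map (\<lambda>i. inst (alpha i) [s, s]) [1..<n + 1]) (replicate n z)"
        unfolding list_all2_conv_all_nth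
      proof (intro conjI allI impI)
        fix j assume "j < length (map (\<lambda>i. inst (alpha i) [s, s]) [1..<n + 1])"
        then have j: "j < n" by (simp del: upt_Suc)
        then have "map (\<lambda>i. inst (alpha i) [s, s]) [1..<n + 1] ! j = inst (alpha (1 + j)) [s, s]"
          by (simp del: upt_Suc)
        moreover have "(inst (alpha (1 + j)) [s, s], z) \<in> eqth ar E"
          by (rule zero_eq) (use j assms in auto)
        ultimately show "(map (\<lambda>i. inst (alpha i) [s, s]) [1..<n + 1] ! j, replicate n z ! j) \<in> eqth ar E"
          using j by simp
      qed (simp del: upt_Suc)
    qed (auto intro: eqth.refl assms)
  qed
  ultimately have e: "(inst theta (map (\<lambda>i. inst (alpha i) [s, s]) [1..<n+1] @ [s]), s) \<in> eqth ar E"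
    and e2: "(inst theta (map (\<lambda>i. inst (alpha i) [s, s]) [1..<n+1] @ [s]), inst theta (replicate n z @ [s])) \<in> eqth ar E"
    by (simp_all only:)
  show ?thesis using eqth.trans[OF eqth.sym[OF e2] e] .
qed

lemma theta_eq:
  assumes "length ys = n" "\<forall>y\<in>set ys. (y, z) \<in> eqth ar E" "wf_trm ar s"
  shows "(inst theta (ys @ [s]), s) \<in> eqth ar E"
proof -
  have "(inst theta (ys @ [s]), inst theta (replicate n z @ [s])) \<in> eqth ar E"
  proof (rule inst_cong_eqth[OF wf_theta])
    show "vars theta \<subseteq> {..<length (ys @ [s])}" by (rule vars_theta2) (simp add: assms)
    show "list_all2 (\<lambda>a b. (a, b) \<in> eqth ar E) (ys @ [s]) (replicate n z @ [s])"
      by (rule list_all2_appendI) (use assms in \<open>auto simp: list_all2_conv_all_nth intro: eqth.refl\<close>)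
  qed
  then show ?thesis using theta0[OF assms(3)] by (rule eqth.trans)
qed

lemma alpha_ideal:
  assumes i: "i \<in> {1..n}" and "(a, b) \<in> eqth ar E" "wf_trm ar b"
  shows "(inst (alpha i) [a, b], z) \<in> eqth ar E"
proof -
  have "(inst (alpha i) [a, b], inst (alpha i) [b, b]) \<in> eqth ar E"
    by (rule inst_cong_eqth[OF wf_alpha[OF i] vars_alpha2[OF i]]) (use assms in \<open>auto intro: eqth.refl\<close>)
  then show ?thesis using zero_eq[OF i assms(3)] by (rule eqth.trans)
qed


definition sY :: "nat \<Rightarrow> ('f, nat) trm" where "sY v = (if v \<in> Yodd then z else Var v)"

lemma wf_sY: "wf_trm ar (sY v)" using wf_z by (simp add: sY_def)

lemma sY_xv[simp]: "subst sY (xv a) = xv a" by (simp add: sY_def xv_def Yodd_def)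
lemma sY_yv[simp]: "subst sY (yv a) = z" by (simp add: sY_def yv_def Yodd_def)
lemma wf_xv[simp]: "wf_trm ar (xv a)" by (simp add: xv_def)
lemma wf_yv[simp]: "wf_trm ar (yv a)" by (simp add: yv_def)

lemma map_sY_xv: "map (subst sY) (map xv L) = map xv L"
  by (induct L) simp_all

lemma ideal_termI: "wf_trm ar t \<Longrightarrow> (subst sY t, z) \<in> eqth ar E \<Longrightarrow> ideal_term ar E z t Yodd"
  unfolding ideal_term_def sY_def by simp

lemma theta_inst_eq:
  assumes "length ys = n" "\<forall>y\<in>set ys. subst sY y = z" "subst sY s = s" "wf_trm ar s"
  shows "(subst sY (inst theta (ys @ [s])), s) \<in> eqth ar E"
proof -
  have "subst sY (inst theta (ys @ [s])) = inst theta (map (subst sY) ys @ [s])"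
    by (subst subst_inst[OF vars_theta2]) (auto simp: assms)
  moreover have "(inst theta (map (subst sY) ys @ [s]), s) \<in> eqth ar E"
    by (rule theta_eq) (use assms wf_z in \<open>auto intro: eqth.refl\<close>)
  ultimately show ?thesis by simp
qed

lemma wf_theta_inst: "\<forall>t\<in>set ts. wf_trm ar t \<Longrightarrow> wf_trm ar (inst theta ts)"
  by (rule wf_inst[OF wf_theta])

lemma wf_alpha_inst: "i \<in> {1..n} \<Longrightarrow> \<forall>t\<in>set ts. wf_trm ar t \<Longrightarrow> wf_trm ar (inst (alpha i) ts)"
  by (rule wf_inst[OF wf_alpha])

lemma ideal_theta_y: "ideal_term ar E z (theta_y n theta) Yodd"
proof (rule ideal_termI)
  show "wf_trm ar (theta_y n theta)" unfolding theta_y_def by (auto intro!: wf_theta_inst)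
  have "map yv [0..<n+1] = map yv [0..<n] @ [yv n]" by simp
  moreover have "subst sY (inst theta (map yv [0..<n] @ [yv n])) = inst theta (map (subst sY) (map yv [0..<n]) @ [z])"
    by (subst subst_inst[OF vars_theta2]) auto
  moreover have "(inst theta (map (subst sY) (map yv [0..<n]) @ [z]), z) \<in> eqth ar E"
    by (rule theta_eq) (auto simp: wf_z intro: eqth.refl)
  ultimately have "(subst sY (inst theta (map yv [0..<n] @ [yv n])), z) \<in> eqth ar E"
    by simp
  then show "(subst sY (theta_y n theta), z) \<in> eqth ar E"
    unfolding theta_y_def by simp
qed

lemma ideal_alpha_yy: "i \<in> {1..n} \<Longrightarrow> ideal_term ar E z (alpha_yy alpha i) Yodd"
  unfolding alpha_yy_def
  by (rule ideal_termI) (auto intro!: wf_alpha_inst simp: subst_inst[OF vars_alpha2] zero_eq wf_z)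

lemma ideal_alpha_y0: "i \<in> {1..n} \<Longrightarrow> ideal_term ar E z (alpha_y0 z alpha i) Yodd"
  unfolding alpha_y0_def
  by (rule ideal_termI) (auto intro!: wf_alpha_inst simp: subst_inst[OF vars_alpha2] zero_eq wf_z subst_closed vars_z)

lemma ideal_z: "ideal_term ar E z z Yodd"
  by (rule ideal_termI) (auto simp: wf_z subst_closed vars_z intro: eqth.refl)

lemma ideal_R: "i \<in> {1..n} \<Longrightarrow> ideal_term ar E z (R_term n alpha theta i) Yodd"
proof (rule ideal_termI)
  assume i: "i \<in> {1..n}"
  show "wf_trm ar (R_term n alpha theta i)" unfolding R_term_def
    by (auto intro!: wf_alpha_inst wf_theta_inst i)
  have e1: "(subst sY (inst theta (map yv [0..<n] @ [xv 0])), xv 0) \<in> eqth ar E"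
    by (rule theta_inst_eq) auto
  have e2: "(subst sY (inst theta (map (\<lambda>b. yv (n + b)) [0..<n] @ [xv 0])), xv 0) \<in> eqth ar E"
    by (rule theta_inst_eq) auto
  have "(inst (alpha i) [subst sY (inst theta (map yv [0..<n] @ [xv 0])),
                          subst sY (inst theta (map (\<lambda>b. yv (n + b)) [0..<n] @ [xv 0]))],
         inst (alpha i) [xv 0, xv 0]) \<in> eqth ar E"
    by (rule inst_cong_eqth[OF wf_alpha[OF i] vars_alpha2[OF i]]) (use e1 e2 in auto)
  then show "(subst sY (R_term n alpha theta i), z) \<in> eqth ar E"
    unfolding R_term_def using zero_eq[OF i wf_xv]
    by (subst subst_inst[OF vars_alpha2[OF i]]) (auto intro: eqth.trans)
qed

lemma ideal_T:
  assumes i: "i \<in> {1..n}"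
    and G1: "\<And>ts. length ts = k \<Longrightarrow> \<forall>t\<in>set ts. wf_trm ar t \<Longrightarrow> wf_trm ar (g ts)"
    and G2: "\<And>ts. length ts = k \<Longrightarrow> subst sY (g ts) = g (map (subst sY) ts)"
    and G3: "\<And>ts ts'. length ts = k \<Longrightarrow> list_all2 (\<lambda>a b. (a, b) \<in> eqth ar E) ts ts' \<Longrightarrow> (g ts, g ts') \<in> eqth ar E"
  shows "ideal_term ar E z (T_term n alpha theta g k i) Yodd"
proof (rule ideal_termI)
  define F where "F = (\<lambda>a. inst theta (map (\<lambda>b. yv (a * n + b)) [0..<n] @ [xv a]))"
  define A where "A = map F [0..<k]"
  define B where "B = (map xv [0..<k] :: ('f, nat) trm list)"
  have lA: "length A = k" and lB: "length B = k" by (simp_all add: A_def B_def)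
  have wA: "\<forall>t\<in>set A. wf_trm ar t" unfolding A_def F_def by (auto intro!: wf_theta_inst)
  have wB: "\<forall>t\<in>set B. wf_trm ar t" unfolding B_def by auto
  have T: "T_term n alpha theta g k i = inst (alpha i) [g A, g B]"
    unfolding T_term_def A_def B_def F_def ..
  show "wf_trm ar (T_term n alpha theta g k i)" unfolding T
    using G1[OF lA wA] G1[OF lB wB] by (auto intro!: wf_alpha_inst i)
  have "list_all2 (\<lambda>a b. (a, b) \<in> eqth ar E) (map (subst sY) A) B"
    unfolding list_all2_conv_all_nth
  proof (intro conjI allI impI)
    fix a assume "a < length (map (subst sY) A)"
    then have a: "a < k" using lA by simp
    have "(subst sY (F a), xv a) \<in> eqth ar E" unfolding F_def
      by (rule theta_inst_eq) auto
    then show "(map (subst sY) A ! a, B ! a) \<in> eqth ar E"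
      using a by (simp add: A_def B_def)
  qed (simp add: lA lB)
  then have e1: "(g (map (subst sY) A), g B) \<in> eqth ar E"
    by (rule G3[rotated]) (simp add: lA)
  have sB: "subst sY (g B) = g B"
    using G2[OF lB] by (simp only: B_def map_sY_xv)
  have "subst sY (T_term n alpha theta g k i) = inst (alpha i) [g (map (subst sY) A), g B]"
    unfolding T by (simp only: subst_inst[OF vars_alpha2[OF i]] list.map G2[OF lA] sB)
  then show "(subst sY (T_term n alpha theta g k i), z) \<in> eqth ar E"
    using alpha_ideal[OF i e1 G1[OF lB wB]] by simp
qed

lemma ideal_S:
  assumes i: "i \<in> {1..n}"
  shows "ideal_term ar E z (S_term n alpha theta (App f) (ar f) i j) Yodd"
proof (rule ideal_termI)
  define F where "F = (\<lambda>a. if a = j then inst theta (map yv [0..<n] @ [xv a]) else xv a)"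
  define A where "A = map F [0..<ar f]"
  define B where "B = (map xv [0..<ar f] :: ('f, nat) trm list)"
  have lA: "length A = ar f" and lB: "length B = ar f" by (simp_all add: A_def B_def)
  have wA: "\<forall>t\<in>set A. wf_trm ar t" unfolding A_def F_def by (auto intro!: wf_theta_inst)
  have wB: "\<forall>t\<in>set B. wf_trm ar t" unfolding B_def by auto
  have S: "S_term n alpha theta (App f) (ar f) i j = inst (alpha i) [App f A, App f B]"
    unfolding S_term_def A_def B_def F_def ..
  show "wf_trm ar (S_term n alpha theta (App f) (ar f) i j)" unfolding S
    using lA wA lB wB by (auto intro!: wf_alpha_inst i)
  have "list_all2 (\<lambda>a b. (a, b) \<in> eqth ar E) (map (subst sY) A) B"
    unfolding list_all2_conv_all_nth
  proof (intro conjI allI impI)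
    fix a assume "a < length (map (subst sY) A)"
    then have a: "a < ar f" using lA by simp
    have "(subst sY (F a), xv a) \<in> eqth ar E"
    proof (cases "a = j")
      case True
      then have "F a = inst theta (map yv [0..<n] @ [xv a])" by (simp add: F_def)
      then show ?thesis by (simp only:) (rule theta_inst_eq, auto)
    next
      case False
      then show ?thesis unfolding F_def by (auto intro: eqth.refl)
    qed
    then show "(map (subst sY) A ! a, B ! a) \<in> eqth ar E"
      using a by (simp add: A_def B_def)
  qed (simp add: lA lB)
  then have e1: "(App f (map (subst sY) A), App f B) \<in> eqth ar E"
    by (intro eqth.cong) (simp add: lA)
  have sB: "subst sY (App f B) = App f B"
    by (simp only: B_def subst.simps map_sY_xv)
  have "subst sY (S_term n alpha theta (App f) (ar f) i j) = inst (alpha i) [App f (map (subst sY) A), App f B]"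
    unfolding S by (simp only: subst_inst[OF vars_alpha2[OF i]] list.map subst.simps(2)[of sY f A] sB)
  then show "(subst sY (S_term n alpha theta (App f) (ar f) i j), z) \<in> eqth ar E"
    using alpha_ideal[OF i e1] lB wB by simp
qed

lemma ideal_TF: "t \<in> TF ar n alpha theta \<Longrightarrow> ideal_term ar E z t Yodd"
  unfolding TF_def
  by (auto intro!: ideal_T intro: eqth.cong)

lemma ideal_Ttheta: "t \<in> Ttheta n alpha theta \<Longrightarrow> ideal_term ar E z t Yodd"
  unfolding Ttheta_def
  by (auto intro!: ideal_T wf_theta_inst inst_cong_eqth wf_theta subst_inst dest: vars_theta_lt)

lemma ideal_Talpha: "t \<in> Talpha n alpha theta \<Longrightarrow> ideal_term ar E z t Yodd"
proof -
  assume "t \<in> Talpha n alpha theta"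
  then obtain i j where t: "t = T_term n alpha theta (inst (alpha j)) 2 i" and i: "i \<in> {1..n}" and j: "j \<in> {1..n}"
    unfolding Talpha_def by blast
  have vl: "vars (alpha j) \<subseteq> {..<length ts}" if "length ts = 2" for ts :: "('f, nat) trm list"
    using vars_alpha2[OF j] that by (simp add: numeral_2_eq_2)
  show ?thesis unfolding t
  proof (rule ideal_T[OF i])
    show "wf_trm ar (inst (alpha j) ts)" if "\<forall>t\<in>set ts. wf_trm ar t" for ts
      using that by (rule wf_alpha_inst[OF j])
    show "subst sY (inst (alpha j) ts) = inst (alpha j) (map (subst sY) ts)" if "length ts = 2" for ts
      by (rule subst_inst[OF vl[OF that]])
    show "(inst (alpha j) ts, inst (alpha j) ts') \<in> eqth ar E"
      if "length ts = 2" "list_all2 (\<lambda>a b. (a, b) \<in> eqth ar E) ts ts'" for ts ts'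
      by (rule inst_cong_eqth[OF wf_alpha[OF j] vl[OF that(1)] that(2)])
  qed
qed

lemma ideal_SF: "t \<in> SF ar n alpha theta \<Longrightarrow> ideal_term ar E z t Yodd"
  unfolding SF_def by (auto intro!: ideal_S)

lemma ideal_Rs: "t \<in> Rs n alpha theta \<Longrightarrow> ideal_term ar E z t Yodd"
  unfolding Rs_def by (auto intro!: ideal_R)

lemma ideal_AlphaYY: "t \<in> AlphaYY n alpha \<Longrightarrow> ideal_term ar E z t Yodd"
  unfolding AlphaYY_def by (auto intro!: ideal_alpha_yy)

lemma ideal_AlphaY0: "t \<in> AlphaY0 n z alpha \<Longrightarrow> ideal_term ar E z t Yodd"
  unfolding AlphaY0_def by (auto intro!: ideal_alpha_y0)

lemma ideal_OpsY:
  assumes "only_constant_zero ar E z" "t \<in> OpsY ar z"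
  shows "ideal_term ar E z t Yodd"
proof -
  have "ideal_term ar E z (op_y ar f) Yodd" for f
  proof (rule ideal_termI)
    show "wf_trm ar (op_y ar f)" by (simp add: op_y_def)
    have "wf_trm ar (subst sY (op_y ar f)) \<and> vars (subst sY (op_y ar f)) = {}"
      by (auto simp: op_y_def wf_z vars_z)
    then show "(subst sY (op_y ar f), z) \<in> eqth ar E"
      using assms(1) unfolding only_constant_zero_def by blast
  qed
  then show ?thesis using assms(2) ideal_z unfolding OpsY_def by auto
qed

end

locale bitm = bitv ar E n z alpha theta
  for ar :: "'f \<Rightarrow> nat" and E n z alpha theta +
  fixes I :: "'f \<Rightarrow> 'a list \<Rightarrow> 'a"
  assumes mods: "models E I"
begin

definition zero :: 'a where "zero = eval I (\<lambda>_. undefined) z"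
definition sA :: "nat \<Rightarrow> 'a \<Rightarrow> 'a \<Rightarrow> 'a" where
  "sA i a b = eval I (\<lambda>v. if v = 0 then a else b) (alpha i)"
definition sT :: "(nat \<Rightarrow> 'a) \<Rightarrow> 'a \<Rightarrow> 'a" where
  "sT h x = eval I (\<lambda>v. if v < n then h v else x) theta"

lemma ev_z[simp]: "eval I \<rho> z = zero"
  unfolding zero_def by (rule eval_cong) (simp add: vars_z)

lemma ev_alpha:
  assumes i: "i \<in> {1..n}"
  shows "eval I \<rho> (inst (alpha i) [s, t]) = sA i (eval I \<rho> s) (eval I \<rho> t)"
  unfolding eval_inst sA_def
  by (rule eval_cong) (auto dest: vars_alpha_lt[OF i] simp: less_2_cases_iff)

lemma sT_cong: "(\<forall>j<n. h j = h' j) \<Longrightarrow> sT h x = sT h' x"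
  unfolding sT_def by (rule eval_cong) auto

lemma ev_theta:
  assumes "length ys = n"
  shows "eval I \<rho> (inst theta (ys @ [x])) = sT (\<lambda>j. eval I \<rho> (ys ! j)) (eval I \<rho> x)"
  unfolding eval_inst sT_def
  by (rule eval_cong) (auto dest!: vars_theta_lt simp: assms nth_append less_Suc_eq)

lemma ev_theta':
  "eval I \<rho> (inst theta (map F [0..<n] @ [x])) = sT (\<lambda>j. eval I \<rho> (F j)) (eval I \<rho> x)"
  by (subst ev_theta) (auto intro: sT_cong)

lemma sem_alpha0: "i \<in> {1..n} \<Longrightarrow> sA i a a = zero"
  using eqth_sound[OF ax_alpha mods, of i "\<lambda>_. a"] by (simp add: ev_alpha)

lemma sem_theta: "sT (\<lambda>j. sA (Suc j) a b) b = a"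
proof -
  let ?\<rho> = "\<lambda>v. if v = 0 then a else b"
  have "eval I ?\<rho> (inst theta (map (\<lambda>i. inst (alpha i) [Var 0, Var 1]) [1..<n+1] @ [Var 1])) = a"
    using eqth_sound[OF ax_theta mods, of ?\<rho>] by simp
  moreover have "eval I ?\<rho> (inst theta (map (\<lambda>i. inst (alpha i) [Var 0, Var 1]) [1..<n+1] @ [Var 1]))
     = sT (\<lambda>j. sA (Suc j) a b) b"
  proof -
    have "map (\<lambda>i. inst (alpha i) [Var 0, Var 1]) [1..<n+1] = map (\<lambda>j. inst (alpha (Suc j)) [Var 0, Var 1]) [0..<n]"
      by (rule nth_equalityI) (simp_all del: upt_Suc)
    then show ?thesis by (simp only: ev_theta') (auto intro!: sT_cong simp: ev_alpha)
  qed
  ultimately show ?thesis by simp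
qed

lemma sem_theta0: "sT (\<lambda>_. zero) a = a"
  using sem_theta[of a a] sT_cong[of "\<lambda>j. sA (Suc j) a a" "\<lambda>_. zero"] by (simp add: sem_alpha0)


definition rel :: "'a set \<Rightarrow> 'a \<Rightarrow> 'a \<Rightarrow> bool" where
  "rel H a b \<longleftrightarrow> (\<forall>i\<in>{1..n}. sA i a b \<in> H)"

lemma rel_refl: "zero \<in> H \<Longrightarrow> rel H a a"
  unfolding rel_def by (simp add: sem_alpha0)

lemma rel_H: "rel H a b \<Longrightarrow> j < n \<Longrightarrow> sA (Suc j) a b \<in> H"
  unfolding rel_def by auto

lemma main_induct:
  assumes D: "\<And>f s s'. length s = ar f \<Longrightarrow> length s' = ar f \<Longrightarrow> (\<forall>j<ar f. rel H (s' ! j) (s ! j))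
                 \<Longrightarrow> rel H (I f s') (I f s)"
  shows "wf_trm ar t \<Longrightarrow> (\<forall>v\<in>vars t. rel H (\<rho>' v) (\<rho> v)) \<Longrightarrow> rel H (eval I \<rho>' t) (eval I \<rho> t)"
proof (induction t)
  case (Var x)
  then show ?case by simp
next
  case (App f ts)
  have "\<forall>j<ar f. rel H (map (eval I \<rho>') ts ! j) (map (eval I \<rho>) ts ! j)"
  proof (intro allI impI)
    fix j assume j: "j < ar f"
    then have jl: "j < length ts" using App.prems by simp
    then have m: "ts ! j \<in> set ts" by simp
    have "rel H (eval I \<rho>' (ts ! j)) (eval I \<rho> (ts ! j))"
      by (rule App.IH[OF m]) (use App.prems m in auto)
    then show "rel H (map (eval I \<rho>') ts ! j) (map (eval I \<rho>) ts ! j)" using jl by simp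
  qed
  then show ?case using D[of "map (eval I \<rho>) ts" f "map (eval I \<rho>') ts"] App.prems by simp
qed

lemma core:
  assumes A: "zero \<in> H"
    and B: "\<And>h x. (\<forall>j<n. h j \<in> H) \<Longrightarrow> x \<in> H \<Longrightarrow> sT h x \<in> H"
    and C: "\<And>b i. b \<in> H \<Longrightarrow> i \<in> {1..n} \<Longrightarrow> sA i b zero \<in> H"
    and D: "\<And>f s s'. length s = ar f \<Longrightarrow> length s' = ar f \<Longrightarrow> (\<forall>j<ar f. rel H (s' ! j) (s ! j))
                 \<Longrightarrow> rel H (I f s') (I f s)"
  shows "is_ideal ar E z I H"
  unfolding is_ideal_def closed_under_def ideal_term_def
proof (intro conjI allI impI)
  show "H \<noteq> {}" using A by auto
  fix t Y \<rho>'
  assume it: "wf_trm ar t \<and> (subst (\<lambda>v. if v \<in> Y then z else Var v) t, z) \<in> eqth ar E"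
    and hY: "\<forall>v\<in>Y. \<rho>' v \<in> H"
  define \<rho> where "\<rho> = (\<lambda>v. if v \<in> Y then zero else \<rho>' v)"
  have "eval I \<rho>' (subst (\<lambda>v. if v \<in> Y then z else Var v) t) = zero"
    using eqth_sound[OF conjunct2[OF it] mods, of \<rho>'] by simp
  moreover have "(\<lambda>v. eval I \<rho>' (if v \<in> Y then z else Var v)) = \<rho>"
    by (rule ext) (simp add: \<rho>_def)
  ultimately have t0: "eval I \<rho> t = zero" by (simp add: eval_subst)
  have "rel H (eval I \<rho>' t) (eval I \<rho> t)"
  proof (rule main_induct[OF D])
    show "wf_trm ar t" using it by simp
    show "\<forall>v\<in>vars t. rel H (\<rho>' v) (\<rho> v)"
      using hY C A by (auto simp: \<rho>_def rel_def sem_alpha0)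
  qed
  then have r: "rel H (eval I \<rho>' t) zero" using t0 by simp
  have "sT (\<lambda>j. sA (Suc j) (eval I \<rho>' t) zero) zero \<in> H"
    by (rule B) (use rel_H[OF r] A in auto)
  then show "eval I \<rho>' t \<in> H" by (simp add: sem_theta)
qed

lemma clos_theta_y:
  assumes "closed_under I H (theta_y n theta) Yodd" "\<forall>j<n. h j \<in> H" "x \<in> H"
  shows "sT h x \<in> H"
proof -
  define \<rho> where "\<rho> = (\<lambda>v. if v div 2 < n then h (v div 2) else x)"
  have "\<forall>v\<in>Yodd. \<rho> v \<in> H" using assms(2,3) by (auto simp: \<rho>_def)
  then have "eval I \<rho> (theta_y n theta) \<in> H" using assms(1) unfolding closed_under_def by blast
  moreover have "theta_y n theta = inst theta (map yv [0..<n] @ [yv n])" by (simp add: theta_y_def)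
  moreover have "sT (\<lambda>j. eval I \<rho> (yv j)) (eval I \<rho> (yv n)) = sT h x"
  proof -
    have "eval I \<rho> (yv n) = x" by (simp add: yv_def \<rho>_def)
    moreover have "sT (\<lambda>j. eval I \<rho> (yv j)) x = sT h x" by (rule sT_cong) (simp add: yv_def \<rho>_def)
    ultimately show ?thesis by simp
  qed
  ultimately show ?thesis by (simp add: ev_theta')
qed

lemma clos_alpha_yy_A:
  assumes "closed_under I H (alpha_yy alpha 1) Yodd" "h \<in> H"
  shows "zero \<in> H"
proof -
  have "eval I (\<lambda>_. h) (alpha_yy alpha 1) \<in> H" using assms(1)[unfolded closed_under_def, rule_format, of "\<lambda>_. h"] assms(2) by simp
  then show ?thesis using n1 by (simp add: alpha_yy_def ev_alpha sem_alpha0 yv_def)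
qed

lemma clos_alpha_yy_C:
  assumes "closed_under I H (alpha_yy alpha i) Yodd" "i \<in> {1..n}" "b \<in> H" "zero \<in> H"
  shows "sA i b zero \<in> H"
proof -
  have "eval I (\<lambda>v. if v = 1 then b else zero) (alpha_yy alpha i) \<in> H"
    using assms unfolding closed_under_def by simp
  then show ?thesis using assms(2) by (simp add: alpha_yy_def ev_alpha yv_def)
qed

lemma clos_alpha_y0_C:
  assumes "closed_under I H (alpha_y0 z alpha i) Yodd" "i \<in> {1..n}" "b \<in> H"
  shows "sA i b zero \<in> H"
proof -
  have "eval I (\<lambda>_. b) (alpha_y0 z alpha i) \<in> H"
    using assms unfolding closed_under_def by simp
  then show ?thesis using assms(2) by (simp add: alpha_y0_def ev_alpha yv_def)
qed

lemma clos_z_A: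
  assumes "closed_under I H z Yodd" "h \<in> H"
  shows "zero \<in> H"
proof -
  have "eval I (\<lambda>_. h) z \<in> H" using assms(1)[unfolded closed_under_def, rule_format, of "\<lambda>_. h"] assms(2) by simp
  then show ?thesis by simp
qed

lemma ev_R: "eval I \<rho> (R_term n alpha theta i) =
   sA i (sT (\<lambda>b. \<rho> (2 * b + 1)) (\<rho> 0)) (sT (\<lambda>b. \<rho> (2 * (n + b) + 1)) (\<rho> 0))" if "i \<in> {1..n}"
  unfolding R_term_def using that by (simp add: ev_alpha ev_theta' xv_def yv_def)

lemma clos_R_A:
  assumes "closed_under I H (R_term n alpha theta 1) Yodd" "h \<in> H"
  shows "zero \<in> H"
proof -
  have "eval I (\<lambda>_. h) (R_term n alpha theta 1) \<in> H" using assms(1)[unfolded closed_under_def, rule_format, of "\<lambda>_. h"] assms(2) by simp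
  then show ?thesis using n1 by (simp add: ev_R sem_alpha0)
qed

lemma clos_R_euclid:
  assumes R: "\<And>i. i \<in> {1..n} \<Longrightarrow> closed_under I H (R_term n alpha theta i) Yodd"
    and A: "zero \<in> H" and ab: "rel H a b" and cb: "rel H c b"
  shows "rel H a c"
  unfolding rel_def
proof
  fix i assume i: "i \<in> {1..n}"
  define \<rho> where "\<rho> = (\<lambda>v. if v = 0 then b else if odd v then
     (if v div 2 < n then sA (Suc (v div 2)) a b else if v div 2 < 2 * n then sA (Suc (v div 2 - n)) c b else zero)
     else zero)"
  have "\<forall>v\<in>Yodd. \<rho> v \<in> H"
    using A rel_H[OF ab] rel_H[OF cb] by (auto simp: \<rho>_def Yodd_def)
  then have "eval I \<rho> (R_term n alpha theta i) \<in> H" using R[OF i] unfolding closed_under_def by blast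
  moreover have "sT (\<lambda>j. \<rho> (2 * j + 1)) (\<rho> 0) = a"
    using sT_cong[of "\<lambda>j. \<rho> (2 * j + 1)" "\<lambda>j. sA (Suc j) a b"] sem_theta[of a b]
    by (simp add: \<rho>_def)
  moreover have "sT (\<lambda>j. \<rho> (2 * (n + j) + 1)) (\<rho> 0) = c"
    using sT_cong[of "\<lambda>j. \<rho> (2 * (n + j) + 1)" "\<lambda>j. sA (Suc j) c b"] sem_theta[of c b]
    by (simp add: \<rho>_def)
  ultimately show "sA i a c \<in> H" using i by (simp add: ev_R)
qed

lemma rel_sym_R:
  assumes R: "\<And>i. i \<in> {1..n} \<Longrightarrow> closed_under I H (R_term n alpha theta i) Yodd"
    and A: "zero \<in> H" and ab: "rel H a b"
  shows "rel H b a"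
  using clos_R_euclid[OF R A rel_refl[OF A] ab] .

lemma rel_trans_R:
  assumes R: "\<And>i. i \<in> {1..n} \<Longrightarrow> closed_under I H (R_term n alpha theta i) Yodd"
    and A: "zero \<in> H" and ab: "rel H a b" and bc: "rel H b c"
  shows "rel H a c"
  using clos_R_euclid[OF R A ab rel_sym_R[OF R A bc]] .

lemma ev_Tf: "i \<in> {1..n} \<Longrightarrow> eval I \<rho> (T_term n alpha theta (App f) k i) =
   sA i (I f (map (\<lambda>a. sT (\<lambda>b. \<rho> (2 * (a * n + b) + 1)) (\<rho> (2 * a))) [0..<k]))
        (I f (map (\<lambda>a. \<rho> (2 * a)) [0..<k]))"
  unfolding T_term_def by (simp add: ev_alpha ev_theta' xv_def yv_def comp_def)

lemma ev_Sf: "i \<in> {1..n} \<Longrightarrow> eval I \<rho> (S_term n alpha theta (App f) k i j) =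
   sA i (I f (map (\<lambda>a. if a = j then sT (\<lambda>b. \<rho> (2 * b + 1)) (\<rho> (2 * a)) else \<rho> (2 * a)) [0..<k]))
        (I f (map (\<lambda>a. \<rho> (2 * a)) [0..<k]))"
  unfolding S_term_def by (simp add: ev_alpha ev_theta' xv_def yv_def comp_def if_distrib cong: if_cong)

lemma divmod_aux: "b < n \<Longrightarrow> (a * n + b) div n = a \<and> (a * n + b) mod n = b"
  by simp

lemma D_TF:
  assumes TF: "\<And>i. i \<in> {1..n} \<Longrightarrow> closed_under I H (T_term n alpha theta (App f) (ar f) i) Yodd"
    and A: "zero \<in> H" and ls: "length s = ar f" and ls': "length s' = ar f"
    and r: "\<forall>j<ar f. rel H (s' ! j) (s ! j)"
  shows "rel H (I f s') (I f s)"
  unfolding rel_def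
proof
  fix i assume i: "i \<in> {1..n}"
  define \<rho> where "\<rho> = (\<lambda>v. if even v then s ! (v div 2) else
     (if v div 2 div n < ar f then sA (Suc (v div 2 mod n)) (s' ! (v div 2 div n)) (s ! (v div 2 div n)) else zero))"
  have n0: "0 < n" using n1 by simp
  have "\<forall>v\<in>Yodd. \<rho> v \<in> H"
  proof
    fix v assume "v \<in> Yodd"
    then have "odd v" by (simp add: Yodd_def)
    then show "\<rho> v \<in> H" using A rel_H[OF spec[OF r, THEN mp]] n0 by (auto simp: \<rho>_def)
  qed
  then have "eval I \<rho> (T_term n alpha theta (App f) (ar f) i) \<in> H"
    using TF[OF i] unfolding closed_under_def by blast
  moreover have "map (\<lambda>a. \<rho> (2 * a)) [0..<ar f] = s"
    by (rule nth_equalityI) (simp_all add: ls \<rho>_def)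
  moreover have "map (\<lambda>a. sT (\<lambda>b. \<rho> (2 * (a * n + b) + 1)) (\<rho> (2 * a))) [0..<ar f] = s'"
  proof (rule nth_equalityI)
    fix a assume "a < length (map (\<lambda>a. sT (\<lambda>b. \<rho> (2 * (a * n + b) + 1)) (\<rho> (2 * a))) [0..<ar f])"
    then have a: "a < ar f" by simp
    have "sT (\<lambda>b. \<rho> (2 * (a * n + b) + 1)) (s ! a) = sT (\<lambda>b. sA (Suc b) (s' ! a) (s ! a)) (s ! a)"
    proof (rule sT_cong, intro allI impI)
      fix b assume b: "b < n"
      have e1: "even (2 * (a * n + b) + 1) = False" by simp
      have e2: "(2 * (a * n + b) + 1) div 2 = a * n + b" by simp
      have d1: "(a * n + b) div n = a" and d2: "(a * n + b) mod n = b" using divmod_aux[OF b] by simp_all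
      show "\<rho> (2 * (a * n + b) + 1) = sA (Suc b) (s' ! a) (s ! a)"
        unfolding \<rho>_def by (simp only: e1 e2 d1 d2 a if_True if_False)
    qed
    moreover have "\<rho> (2 * a) = s ! a" by (simp add: \<rho>_def)
    ultimately show "map (\<lambda>a. sT (\<lambda>b. \<rho> (2 * (a * n + b) + 1)) (\<rho> (2 * a))) [0..<ar f] ! a = s' ! a"
      using a by (simp add: sem_theta)
  qed (simp add: ls')
  ultimately show "sA i (I f s') (I f s) \<in> H" using i by (simp add: ev_Tf)
qed

lemma S_step:
  assumes S: "\<And>i. i \<in> {1..n} \<Longrightarrow> closed_under I H (S_term n alpha theta (App f) (ar f) i j) Yodd"
    and A: "zero \<in> H" and lu: "length u = ar f" and j: "j < ar f" and r: "rel H w (u ! j)"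
  shows "rel H (I f (u[j := w])) (I f u)"
  unfolding rel_def
proof
  fix i assume i: "i \<in> {1..n}"
  define \<rho> where "\<rho> = (\<lambda>v. if even v then u ! (v div 2) else
     (if v div 2 < n then sA (Suc (v div 2)) w (u ! j) else zero))"
  have "\<forall>v\<in>Yodd. \<rho> v \<in> H"
    using A rel_H[OF r] by (auto simp: \<rho>_def Yodd_def)
  then have "eval I \<rho> (S_term n alpha theta (App f) (ar f) i j) \<in> H"
    using S[OF i] unfolding closed_under_def by blast
  moreover have "map (\<lambda>a. \<rho> (2 * a)) [0..<ar f] = u"
    by (rule nth_equalityI) (simp_all add: lu \<rho>_def)
  moreover have "map (\<lambda>a. if a = j then sT (\<lambda>b. \<rho> (2 * b + 1)) (\<rho> (2 * a)) else \<rho> (2 * a)) [0..<ar f] = u[j := w]"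
  proof (rule nth_equalityI)
    fix a assume "a < length (map (\<lambda>a. if a = j then sT (\<lambda>b. \<rho> (2 * b + 1)) (\<rho> (2 * a)) else \<rho> (2 * a)) [0..<ar f])"
    then have a: "a < ar f" by simp
    have "sT (\<lambda>b. \<rho> (2 * b + 1)) (u ! j) = sT (\<lambda>b. sA (Suc b) w (u ! j)) (u ! j)"
    proof (rule sT_cong, intro allI impI)
      fix b assume b: "b < n"
      have e1: "even (2 * b + 1) = False" by simp
      have e2: "(2 * b + 1) div 2 = b" by simp
      show "\<rho> (2 * b + 1) = sA (Suc b) w (u ! j)"
        unfolding \<rho>_def by (simp only: e1 e2 b if_True if_False)
    qed
    then show "map (\<lambda>a. if a = j then sT (\<lambda>b. \<rho> (2 * b + 1)) (\<rho> (2 * a)) else \<rho> (2 * a)) [0..<ar f] ! a = u[j := w] ! a"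
      using a lu by (simp add: \<rho>_def sem_theta nth_list_update)
  qed (simp add: lu)
  ultimately show "sA i (I f (u[j := w])) (I f u) \<in> H" using i by (simp add: ev_Sf)
qed

lemma D_SF:
  assumes S: "\<And>i j. i \<in> {1..n} \<Longrightarrow> j < ar f \<Longrightarrow> closed_under I H (S_term n alpha theta (App f) (ar f) i j) Yodd"
    and R: "\<And>i. i \<in> {1..n} \<Longrightarrow> closed_under I H (R_term n alpha theta i) Yodd"
    and A: "zero \<in> H" and ls: "length s = ar f" and ls': "length s' = ar f"
    and r: "\<forall>j<ar f. rel H (s' ! j) (s ! j)"
  shows "rel H (I f s') (I f s)"
proof -
  define u where "u = (\<lambda>m. map (\<lambda>a. if a < m then s' ! a else s ! a) [0..<ar f])"
  have lu: "length (u m) = ar f" for m by (simp add: u_def)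
  have "m \<le> ar f \<Longrightarrow> rel H (I f (u m)) (I f s)" for m
  proof (induction m)
    case 0
    have "u 0 = s" by (rule nth_equalityI) (simp_all add: u_def ls)
    then show ?case using rel_refl[OF A] by simp
  next
    case (Suc m)
    then have m: "m < ar f" by simp
    have "u (Suc m) = (u m)[m := s' ! m]"
      by (rule nth_equalityI) (use m in \<open>auto simp: u_def nth_list_update\<close>)
    moreover have "u m ! m = s ! m" using m by (simp add: u_def)
    moreover have "rel H (I f ((u m)[m := s' ! m])) (I f (u m))"
      by (rule S_step[OF S[OF _ m] A lu m]) (use r m \<open>u m ! m = s ! m\<close> in auto)
    ultimately show ?case using rel_trans_R[OF R A] Suc by auto
  qed
  moreover have "u (ar f) = s'" by (rule nth_equalityI) (simp_all add: u_def ls')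
  ultimately show ?thesis by (metis order_refl)
qed

lemma clos_ops:
  assumes O: "\<And>f. closed_under I H (op_y ar f) Yodd" and A: "zero \<in> H"
  shows "wf_trm ar t \<Longrightarrow> (\<forall>v\<in>vars t. \<rho> v \<in> H) \<Longrightarrow> eval I \<rho> t \<in> H"
proof (induction t)
  case (Var x)
  then show ?case by simp
next
  case (App f ts)
  define s where "s = map (eval I \<rho>) ts"
  have ls: "length s = ar f" using App.prems by (simp add: s_def)
  have sH: "\<forall>x\<in>set s. x \<in> H" using App by (auto simp: s_def)
  define \<sigma> where "\<sigma> = (\<lambda>v. if v div 2 < ar f then s ! (v div 2) else zero)"
  have "\<forall>v\<in>Yodd. \<sigma> v \<in> H" using sH A ls by (auto simp: \<sigma>_def)
  then have "eval I \<sigma> (op_y ar f) \<in> H" using O unfolding closed_under_def by blast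
  moreover have "map (\<lambda>j. \<sigma> (2 * j + 1)) [0..<ar f] = s"
    by (rule nth_equalityI) (simp_all add: ls \<sigma>_def)
  ultimately show ?case by (simp add: op_y_def yv_def s_def comp_def)
qed

lemma clos_ops_B:
  assumes O: "\<And>f. closed_under I H (op_y ar f) Yodd" and A: "zero \<in> H"
    and "\<forall>j<n. h j \<in> H" "x \<in> H"
  shows "sT h x \<in> H"
  unfolding sT_def by (rule clos_ops[OF O A wf_theta]) (use assms in auto)

lemma clos_ops_C:
  assumes O: "\<And>f. closed_under I H (op_y ar f) Yodd" and A: "zero \<in> H"
    and "b \<in> H" "i \<in> {1..n}"
  shows "sA i b zero \<in> H"
  unfolding sA_def by (rule clos_ops[OF O A wf_alpha]) (use assms in auto)

definition ABC :: "'a set \<Rightarrow> bool" where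
  "ABC H \<longleftrightarrow> zero \<in> H \<and> (\<forall>h x. (\<forall>j<n. h j \<in> H) \<longrightarrow> x \<in> H \<longrightarrow> sT h x \<in> H)
     \<and> (\<forall>b i. b \<in> H \<longrightarrow> i \<in> {1..n} \<longrightarrow> sA i b zero \<in> H)"

lemma ok_TF:
  assumes "ABC H" "\<forall>t\<in>TF ar n alpha theta. closed_under I H t Yodd"
  shows "is_ideal ar E z I H"
proof (rule core)
  show A: "zero \<in> H" using assms(1) by (simp add: ABC_def)
  show "\<And>h x. \<forall>j<n. h j \<in> H \<Longrightarrow> x \<in> H \<Longrightarrow> sT h x \<in> H" using assms(1) by (simp add: ABC_def)
  show "\<And>b i. b \<in> H \<Longrightarrow> i \<in> {1..n} \<Longrightarrow> sA i b zero \<in> H" using assms(1) by (simp add: ABC_def)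
  fix f s s' assume "length s = ar f" "length s' = ar f" "\<forall>j<ar f. rel H (s' ! j) (s ! j)"
  then show "rel H (I f s') (I f s)"
    by (intro D_TF[OF _ A]) (use assms(2) in \<open>auto simp: TF_def\<close>)
qed

lemma ok_SF:
  assumes "ABC H" "\<forall>t\<in>Rs n alpha theta \<union> SF ar n alpha theta. closed_under I H t Yodd"
  shows "is_ideal ar E z I H"
proof (rule core)
  show A: "zero \<in> H" using assms(1) by (simp add: ABC_def)
  show "\<And>h x. \<forall>j<n. h j \<in> H \<Longrightarrow> x \<in> H \<Longrightarrow> sT h x \<in> H" using assms(1) by (simp add: ABC_def)
  show "\<And>b i. b \<in> H \<Longrightarrow> i \<in> {1..n} \<Longrightarrow> sA i b zero \<in> H" using assms(1) by (simp add: ABC_def)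
  fix f s s' assume "length s = ar f" "length s' = ar f" "\<forall>j<ar f. rel H (s' ! j) (s ! j)"
  then show "rel H (I f s') (I f s)"
    by (intro D_SF[OF _ _ A]) (use assms(2) in \<open>auto simp: SF_def Rs_def\<close>)
qed

lemma ABC_ops:
  assumes "\<forall>t\<in>OpsY ar z. closed_under I H t Yodd" and ne: "H \<noteq> {}"
  shows "ABC H"
proof -
  have O: "\<And>f. closed_under I H (op_y ar f) Yodd" using assms by (simp add: OpsY_def)
  have "\<And>f. op_y ar f \<in> OpsY ar z" by (simp add: OpsY_def)
  have cz: "closed_under I H z Yodd" using assms by (simp add: OpsY_def)
  obtain h where h: "h \<in> H" using ne by auto
  have A: "zero \<in> H" using clos_z_A[OF cz h] .
  show ?thesis unfolding ABC_def using A clos_ops_B[OF O A] clos_ops_C[OF O A] by blast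
qed

lemma ABC_i:
  assumes "H \<noteq> {}" "\<forall>t\<in>{theta_y n theta} \<union> AlphaYY n alpha. closed_under I H t Yodd"
  shows "ABC H"
proof -
  obtain h where h: "h \<in> H" using assms(1) by auto
  have ay: "\<And>i. i \<in> {1..n} \<Longrightarrow> closed_under I H (alpha_yy alpha i) Yodd"
    using assms(2) by (auto simp: AlphaYY_def)
  have A: "zero \<in> H" using clos_alpha_yy_A[OF ay h] n1 by simp
  show ?thesis unfolding ABC_def
    using A clos_theta_y[of H] assms(2) clos_alpha_yy_C[OF ay _ _ A] by auto
qed

lemma BC_y0:
  assumes "zero \<in> H" "\<forall>t\<in>{theta_y n theta} \<union> AlphaY0 n z alpha. closed_under I H t Yodd"
  shows "ABC H"
proof -
  have ay: "\<And>i. i \<in> {1..n} \<Longrightarrow> closed_under I H (alpha_y0 z alpha i) Yodd"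
    using assms(2) by (auto simp: AlphaY0_def)
  show ?thesis unfolding ABC_def
    using assms(1) clos_theta_y[of H] assms(2) clos_alpha_y0_C[OF ay] by auto
qed

lemma A_R:
  assumes "H \<noteq> {}" "\<forall>t\<in>Rs n alpha theta. closed_under I H t Yodd"
  shows "zero \<in> H"
proof -
  obtain h where h: "h \<in> H" using assms(1) by auto
  have "closed_under I H (R_term n alpha theta 1) Yodd" using assms(2) n1 by (auto simp: Rs_def)
  then show ?thesis using clos_R_A h by blast
qed

lemma case_i: "H \<noteq> {} \<Longrightarrow> \<forall>t\<in>({theta_y n theta} \<union> AlphaYY n alpha) \<union> (TF ar n alpha theta \<union> Ttheta n alpha theta).
    closed_under I H t Yodd \<Longrightarrow> is_ideal ar E z I H"
  by (rule ok_TF[OF ABC_i]) auto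

lemma case_ii: "H \<noteq> {} \<Longrightarrow> \<forall>t\<in>({z, theta_y n theta} \<union> AlphaY0 n z alpha) \<union>
    (TF ar n alpha theta \<union> Ttheta n alpha theta \<union> Talpha n alpha theta).
    closed_under I H t Yodd \<Longrightarrow> is_ideal ar E z I H"
proof -
  assume ne: "H \<noteq> {}" and c: "\<forall>t\<in>({z, theta_y n theta} \<union> AlphaY0 n z alpha) \<union>
    (TF ar n alpha theta \<union> Ttheta n alpha theta \<union> Talpha n alpha theta). closed_under I H t Yodd"
  obtain h where h: "h \<in> H" using ne by auto
  have A: "zero \<in> H" using clos_z_A[OF _ h] c by auto
  show ?thesis by (rule ok_TF[OF BC_y0[OF A]]) (use c in auto)
qed

lemma case_iii: "H \<noteq> {} \<Longrightarrow> \<forall>t\<in>({theta_y n theta} \<union> AlphaY0 n z alpha) \<union>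
    (Rs n alpha theta \<union> TF ar n alpha theta). closed_under I H t Yodd \<Longrightarrow> is_ideal ar E z I H"
proof -
  assume ne: "H \<noteq> {}" and c: "\<forall>t\<in>({theta_y n theta} \<union> AlphaY0 n z alpha) \<union>
    (Rs n alpha theta \<union> TF ar n alpha theta). closed_under I H t Yodd"
  have A: "zero \<in> H" using A_R[OF ne] c by auto
  show ?thesis by (rule ok_TF[OF BC_y0[OF A]]) (use c in auto)
qed

lemma case_iv: "H \<noteq> {} \<Longrightarrow> \<forall>t\<in>({theta_y n theta} \<union> AlphaY0 n z alpha) \<union>
    (Rs n alpha theta \<union> SF ar n alpha theta). closed_under I H t Yodd \<Longrightarrow> is_ideal ar E z I H"
proof -
  assume ne: "H \<noteq> {}" and c: "\<forall>t\<in>({theta_y n theta} \<union> AlphaY0 n z alpha) \<union>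
    (Rs n alpha theta \<union> SF ar n alpha theta). closed_under I H t Yodd"
  have A: "zero \<in> H" using A_R[OF ne] c by auto
  show ?thesis by (rule ok_SF[OF BC_y0[OF A]]) (use c in auto)
qed

lemma case_i_ops: "H \<noteq> {} \<Longrightarrow> \<forall>t\<in>OpsY ar z \<union> (TF ar n alpha theta \<union> Ttheta n alpha theta).
    closed_under I H t Yodd \<Longrightarrow> is_ideal ar E z I H"
  by (rule ok_TF[OF ABC_ops], auto)+

lemma case_ii_ops: "H \<noteq> {} \<Longrightarrow> \<forall>t\<in>OpsY ar z \<union> (TF ar n alpha theta \<union> Ttheta n alpha theta \<union> Talpha n alpha theta).
    closed_under I H t Yodd \<Longrightarrow> is_ideal ar E z I H"
  by (rule ok_TF[OF ABC_ops], auto)+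

lemma case_iii_ops: "H \<noteq> {} \<Longrightarrow> \<forall>t\<in>OpsY ar z \<union> (Rs n alpha theta \<union> TF ar n alpha theta).
    closed_under I H t Yodd \<Longrightarrow> is_ideal ar E z I H"
  by (rule ok_TF[OF ABC_ops], auto)+

lemma case_iv_ops: "H \<noteq> {} \<Longrightarrow> \<forall>t\<in>OpsY ar z \<union> (Rs n alpha theta \<union> SF ar n alpha theta).
    closed_under I H t Yodd \<Longrightarrow> is_ideal ar E z I H"
  by (rule ok_SF[OF ABC_ops], auto)+
end


lemma det_I:
  assumes "\<forall>t\<in>S. ideal_term ar E z t Yodd"
    and "\<And>(I :: 'f \<Rightarrow> 'a list \<Rightarrow> 'a) H. models E I \<Longrightarrow> H \<noteq> {} \<Longrightarrow> \<forall>t\<in>S. closed_under I H t Yodd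
           \<Longrightarrow> is_ideal ar E z I H"
  shows "determines_ideals ar E z (with_Y S) TYPE('a)"
  unfolding determines_ideals_def
proof (intro allI impI)
  fix I :: "'f \<Rightarrow> 'a list \<Rightarrow> 'a" and H :: "'a set"
  assume m: "models E I" and ne: "H \<noteq> {}"
  have eq: "(\<forall>(t, Y)\<in>with_Y S. closed_under I H t Y) \<longleftrightarrow> (\<forall>t\<in>S. closed_under I H t Yodd)"
    by (auto simp: with_Y_def)
  show "is_ideal ar E z I H = (\<forall>(t, Y)\<in>with_Y S. closed_under I H t Y)"
    unfolding eq using assms(1) assms(2)[OF m ne] unfolding is_ideal_def by blast
qed

theorem theorem2p6:
  fixes ar :: "'f \<Rightarrow> nat"
    and E :: "(('f, nat) trm \<times> ('f, nat) trm) set"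
    and n :: nat and z :: "('f, nat) trm"
    and alpha :: "nat \<Rightarrow> ('f, nat) trm" and theta :: "('f, nat) trm"
  assumes "wf_eqs ar E"
    and "bit_speciale ar E n z alpha theta"
  shows "(\<forall>P \<in> {set_i ar n z alpha theta, set_ii ar n z alpha theta,
                  set_iii ar n z alpha theta, set_iv ar n z alpha theta}.
            determines_ideals ar E z (with_Y (fst P \<union> snd P)) TYPE('a))
       \<and> (only_constant_zero ar E z \<longrightarrow>
          (\<forall>P \<in> {set_i ar n z alpha theta, set_ii ar n z alpha theta,
                  set_iii ar n z alpha theta, set_iv ar n z alpha theta}.
            determines_ideals ar E z (with_Y (OpsY ar z \<union> snd P)) TYPE('a)))"
proof -
  have bv: "bitv ar E n z alpha theta" using assms(2) by (simp add: bitv_def)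
  have bm: "bitm ar E n z alpha theta I" if "models E I" for I :: "'f \<Rightarrow> 'a list \<Rightarrow> 'a"
    using assms(2) that by (simp add: bitm_def bitv_def bitm_axioms_def)
  note idl = bitv.ideal_theta_y[OF bv] bitv.ideal_AlphaYY[OF bv] bitv.ideal_AlphaY0[OF bv]
    bitv.ideal_z[OF bv] bitv.ideal_TF[OF bv] bitv.ideal_Ttheta[OF bv] bitv.ideal_Talpha[OF bv]
    bitv.ideal_Rs[OF bv] bitv.ideal_SF[OF bv]
  have 1: "determines_ideals ar E z (with_Y (fst (set_i ar n z alpha theta) \<union> snd (set_i ar n z alpha theta))) TYPE('a)"
    unfolding set_i_def fst_conv snd_conv
    by (rule det_I) (use idl bitm.case_i[OF bm] in auto)
  have 2: "determines_ideals ar E z (with_Y (fst (set_ii ar n z alpha theta) \<union> snd (set_ii ar n z alpha theta))) TYPE('a)"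
    unfolding set_ii_def fst_conv snd_conv
    by (rule det_I) (use idl bitm.case_ii[OF bm] in auto)
  have 3: "determines_ideals ar E z (with_Y (fst (set_iii ar n z alpha theta) \<union> snd (set_iii ar n z alpha theta))) TYPE('a)"
    unfolding set_iii_def fst_conv snd_conv
    by (rule det_I) (use idl bitm.case_iii[OF bm] in auto)
  have 4: "determines_ideals ar E z (with_Y (fst (set_iv ar n z alpha theta) \<union> snd (set_iv ar n z alpha theta))) TYPE('a)"
    unfolding set_iv_def fst_conv snd_conv
    by (rule det_I) (use idl bitm.case_iv[OF bm] in auto)
  have semi: "determines_ideals ar E z (with_Y (OpsY ar z \<union> snd P)) TYPE('a)"
    if oc: "only_constant_zero ar E z" and P: "P \<in> {set_i ar n z alpha theta, set_ii ar n z alpha theta,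
                  set_iii ar n z alpha theta, set_iv ar n z alpha theta}" for P
  proof -
    have ops: "\<forall>t\<in>OpsY ar z. ideal_term ar E z t Yodd" using bitv.ideal_OpsY[OF bv oc] by blast
    from P show ?thesis
    proof (elim insertE emptyE)
      assume "P = set_i ar n z alpha theta"
      then show ?thesis unfolding set_i_def snd_conv
        by (simp only:) (rule det_I, use idl ops bitm.case_i_ops[OF bm] in auto)
    next
      assume "P = set_ii ar n z alpha theta"
      then show ?thesis unfolding set_ii_def snd_conv
        by (simp only:) (rule det_I, use idl ops bitm.case_ii_ops[OF bm] in auto)
    next
      assume "P = set_iii ar n z alpha theta"
      then show ?thesis unfolding set_iii_def snd_conv
        by (simp only:) (rule det_I, use idl ops bitm.case_iii_ops[OF bm] in auto)
    next
      assume "P = set_iv ar n z alpha theta"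
      then show ?thesis unfolding set_iv_def snd_conv
        by (simp only:) (rule det_I, use idl ops bitm.case_iv_ops[OF bm] in auto)
    qed
  qed
  show ?thesis using 1 2 3 4 semi by blast
qed

end
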